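(* Let $n \in \mathbb{N}$ with $n \geq 7$ and let $\delta_1, \dots, \delta_{2^n} \in [-1,1]$ satisfy $\delta_1 + \delta_2 + \cdots + \delta_{2^n} \leq 1$. Then there exists an interval $I$ in $\mathbb{N}$ such that $I \subset [1, 2^n]$, $|I| \geq n$, and $$\max_{\min I \leq k \leq \max I} \ \sum_{j=k}^{\max I} \delta_j \leq 1.$$
   Context: An interval in $\mathbb{N}$ is a set of the form $[m,n] \cap \mathbb{N}$ with $m,n \in \mathbb{N}$, $m \le n$; $|I|$ denotes its cardinality. *)

theory Defs
  imports Complex_Main
begin

definition nat_interval :: "nat set \<Rightarrow> bool" where
  "nat_interval I \<longleftrightarrow> (\<exists>m n. m \<le> n \<and> I = {m..n})"

end

theory Submission
  imports Defs
begin

lemma pow_bound: "n \<ge> 7 \<Longrightarrow> n * (n + 1) \<le> (2::nat) ^ n"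
proof (induction n rule: dec_induct[where i=7])
  case base then show ?case by simp
next
  case (step m)
  have "Suc m * (Suc m + 1) = m * (m+1) + 2 * (m + 1)" by (simp add: algebra_simps)
  also have "\<dots> \<le> 2 * (m * (m+1))" using step(1) mult_le_mono[of 2 m "m+1" "m+1"] by (simp add: algebra_simps)
  also have "\<dots> \<le> 2 * 2 ^ m" using step(3) by simp
  finally show ?case by simp
qed

lemma split_sum:
  fixes \<delta> :: "nat \<Rightarrow> real"
  assumes "1 \<le> k" "k \<le> b + 1"
  shows "(\<Sum>j=k..b. \<delta> j) = (\<Sum>j=1..b. \<delta> j) - (\<Sum>j=1..k-1. \<delta> j)"
proof -
  have "{1..b} = {1..k-1} \<union> {k..b}" using assms by auto
  moreover have "{1..k-1} \<inter> {k..b} = {}" by auto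
  ultimately have "(\<Sum>j=1..b. \<delta> j) = (\<Sum>j=1..k-1. \<delta> j) + (\<Sum>j=k..b. \<delta> j)"
    by (simp add: sum.union_disjoint)
  then show ?thesis by simp
qed

theorem mainTheorem5:
  fixes n :: nat and \<delta> :: "nat \<Rightarrow> real"
  assumes "n \<ge> 7"
    and "\<forall>i\<in>{1..2^n}. -1 \<le> \<delta> i \<and> \<delta> i \<le> 1"
    and "(\<Sum>i=1..2^n. \<delta> i) \<le> 1"
  shows "\<exists>I. nat_interval I \<and> I \<subseteq> {1..2^n} \<and> card I \<ge> n \<and>
           (\<forall>k\<in>{Min I..Max I}. (\<Sum>j=k..Max I. \<delta> j) \<le> 1)"
proof -
  define N :: nat where "N = 2^n"
  define T where "T b = (\<Sum>j=1..b. \<delta> j)" for b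
  have n1: "n \<ge> 1" using assms(1) by simp
  have lowT: "T b \<ge> - real b" if "b \<le> N" for b
  proof -
    have "(\<Sum>j=1..b. (-1::real)) \<le> (\<Sum>j=1..b. \<delta> j)"
      by (rule sum_mono) (use assms(2) that N_def in auto)
    then show ?thesis unfolding T_def by simp
  qed
  have "\<exists>b. n \<le> b \<and> b \<le> N \<and> (\<forall>i\<in>{b-n..<b}. T b \<le> T i + 1)"
  proof (rule ccontr)
    assume H: "\<not> ?thesis"
    have claim: "b \<le> N \<longrightarrow> T b > real (b div n) - real n" for b
    proof (induction b rule: less_induct)
      case (less b)
      show ?case
      proof
        assume bN: "b \<le> N"
        show "T b > real (b div n) - real n"
        proof (cases "b < n")
          case True
          then have "b div n = 0" by simp
          then show ?thesis using lowT[OF bN] True by simp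
        next
          case False
          then obtain i where i: "i \<in> {b-n..<b}" "T b > T i + 1" using H bN by force
          have "i \<le> N" "i < b" using i bN by auto
          then have Ti: "T i > real (i div n) - real n" using less by blast
          have "b \<le> i + n" using i by auto
          then have "b div n \<le> (i + n) div n" by (simp add: div_le_mono)
          also have "(i + n) div n = i div n + 1" using n1 by simp
          finally have "real (b div n) \<le> real (i div n) + 1" by linarith
          then show ?thesis using Ti i(2) by linarith
        qed
      qed
    qed
    have "T N > real (N div n) - real n" using claim by blast
    moreover have "n * (n+1) \<le> N" using pow_bound[OF assms(1)] N_def by simp
    then have "n + 1 \<le> N div n" using n1
      by (metis div_le_mono nonzero_mult_div_cancel_left not_one_le_zero)
    moreover have "T N \<le> 1" using assms(3) T_def N_def by simp
    ultimately show False by linarith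
  qed
  then obtain b where b: "n \<le> b" "b \<le> N" "\<forall>i\<in>{b-n..<b}. T b \<le> T i + 1" by blast
  define I where "I = {b-n+1..b}"
  have I1: "nat_interval I" unfolding nat_interval_def I_def using n1 b(1) by (intro exI[of _ "b-n+1"] exI[of _ b]) auto
  have I2: "I \<subseteq> {1..2^n}" unfolding I_def using b N_def n1 by auto
  have I3: "card I \<ge> n" unfolding I_def using b by simp
  have mn: "Min I = b-n+1" "Max I = b" unfolding I_def using n1 b(1) by (auto simp: Min_eq_iff Max_eq_iff)
  have I4: "\<forall>k\<in>{Min I..Max I}. (\<Sum>j=k..Max I. \<delta> j) \<le> 1"
  proof
    fix k assume k: "k \<in> {Min I..Max I}"
    then have k1: "1 \<le> k" "k \<le> b + 1" "k - 1 \<in> {b-n..<b}" using mn b n1 by auto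
    have "(\<Sum>j=k..Max I. \<delta> j) = T b - T (k-1)" using split_sum[OF k1(1,2)] mn T_def by simp
    then show "(\<Sum>j=k..Max I. \<delta> j) \<le> 1" using b(3) k1(3) by fastforce
  qed
  show ?thesis using I1 I2 I3 I4 by blast
qed

end
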